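(* Assume that every loss function takes values in $[0,1]$, i.e., $0 \leq f_t(\mathbf{w}) \leq 1$ for all $\mathbf{w}\in \Omega$ and all rounds $t$. Then for any interval $J=[i,j] \in \mathcal{I}$, AOA satisfies \[ \sum_{t=i}^j f_t(\mathbf{w}_t) - \sum_{t=i}^j f_t(\mathbf{w}_{t,J}) \leq \sqrt{3 |J| c'(j) } \] where \[ c'(j) \leq 1+ \ln m'(j) + \ln\frac{5+ 3 \ln(1+j)}{2} \leq 1+ \ln j + \ln(1+ \log_2 j) + \ln\frac{5+ 3 \ln(1+j)}{2} . \]
   Context: Online convex optimization: in each round $t$ the learner picks $\mathbf{w}_t$ from a convex set $\Omega$ and then suffers loss $f_t(\mathbf{w}_t)$ for a convex function $f_t$. The geometric covering (GC) intervals are $\mathcal{I}=\bigcup_{k \in \mathbb{N}\cup\{0\}} \mathcal{I}_k$ with $\mathcal{I}_k=\{[i\cdot 2^k,(i+1)\cdot 2^k-1]: i\in\mathbb{N}\}$. The algorithm AOA (Adaptive Online learning based on Ader) creates, for each GC interval $I$ at its starting round, an expert $E_I$ running an instance of Ader (a dynamic-regret algorithm combining OGD instances with various step sizes via Hedge) with horizon $|I|$; the expert is active exactly during $I$ and outputs $\mathbf{w}_{t,I}$ at round $t\in I$. AOA combines active experts with AdaNormalHedge: with potential $\Phi(R,C)=\exp([R]_+^2/(3C))$ ($\Phi(0,0)=1$) and weight function $w(R,C)=\frac12(\Phi(R+1,C+1)-\Phi(R-1,C+1))$, each active expert gets weight $p_{t,I}\propto w(R_{t-1,I},C_{t-1,I})$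 where $R_{t-1,I}=\sum_{u=\min I}^{t-1}(f_u(\mathbf{w}_u)-f_u(\mathbf{w}_{u,I}))$ and $C_{t-1,I}=\sum_{u=\min I}^{t-1}|f_u(\mathbf{w}_u)-f_u(\mathbf{w}_{u,I})|$, and AOA outputs $\mathbf{w}_t=\sum_{I} p_{t,I}\mathbf{w}_{t,I}$ (sum over active experts). $m'(t)$ denotes the total number of experts created up to round $t$, which satisfies $m'(t)\leq t(1+\log_2 t)$. *)

theory Defs
  imports "HOL-Analysis.Analysis"
begin

text \<open>Geometric covering intervals [a,b], represented by the pair (a,b) of their
  first and last round: [i*2^k, (i+1)*2^k - 1] with i >= 1, k >= 0.\<close>
definition GC :: "(nat \<times> nat) set" where
  "GC = {(i * 2 ^ k, (i + 1) * 2 ^ k - 1) | i k. 1 \<le> i}"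

definition active :: "nat \<Rightarrow> (nat \<times> nat) set" where
  "active t = {I \<in> GC. fst I \<le> t \<and> t \<le> snd I}"

definition m' :: "nat \<Rightarrow> nat" where
  "m' t = card {I \<in> GC. fst I \<le> t}"

text \<open>AdaNormalHedge potential; for C = 0 the division yields 0, so Phi 0 0 = 1.\<close>
definition Phi :: "real \<Rightarrow> real \<Rightarrow> real" where
  "Phi R C = exp ((max R 0)\<^sup>2 / (3 * C))"

definition anh_weight :: "real \<Rightarrow> real \<Rightarrow> real" where
  "anh_weight R C = (Phi (R + 1) (C + 1) - Phi (R - 1) (C + 1)) / 2"

definition regR :: "(nat \<Rightarrow> 'a \<Rightarrow> real) \<Rightarrow> (nat \<Rightarrow> 'a) \<Rightarrow> (nat \<times> nat \<Rightarrow> nat \<Rightarrow> 'a)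
    \<Rightarrow> nat \<times> nat \<Rightarrow> nat \<Rightarrow> real" where
  "regR f h wexp I t = (\<Sum>u\<in>{fst I..<t}. f u (h u) - f u (wexp I u))"

definition regC :: "(nat \<Rightarrow> 'a \<Rightarrow> real) \<Rightarrow> (nat \<Rightarrow> 'a) \<Rightarrow> (nat \<times> nat \<Rightarrow> nat \<Rightarrow> 'a)
    \<Rightarrow> nat \<times> nat \<Rightarrow> nat \<Rightarrow> real" where
  "regC f h wexp I t = (\<Sum>u\<in>{fst I..<t}. \<bar>f u (h u) - f u (wexp I u)\<bar>)"

text \<open>One AOA round t, given the learner's past predictions h (used only at rounds < t).\<close>
definition aoa_step :: "(nat \<Rightarrow> 'a \<Rightarrow> real) \<Rightarrow> (nat \<times> nat \<Rightarrow> nat \<Rightarrow> 'a::real_vector)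
    \<Rightarrow> (nat \<Rightarrow> 'a) \<Rightarrow> nat \<Rightarrow> 'a" where
  "aoa_step f wexp h t =
     (let W = (\<lambda>I. anh_weight (regR f h wexp I t) (regC f h wexp I t));
          Z = (\<Sum>I\<in>active t. W I)
      in (\<Sum>I\<in>active t. (W I / Z) *\<^sub>R wexp I t))"

primrec aoa_hist :: "(nat \<Rightarrow> 'a \<Rightarrow> real) \<Rightarrow> (nat \<times> nat \<Rightarrow> nat \<Rightarrow> 'a::real_vector)
    \<Rightarrow> nat \<Rightarrow> nat \<Rightarrow> 'a" where
  "aoa_hist f wexp 0 = (\<lambda>_. 0)"
| "aoa_hist f wexp (Suc t) =
     (aoa_hist f wexp t)(Suc t := aoa_step f wexp (aoa_hist f wexp t) (Suc t))"

text \<open>AOA's prediction w_t at round t >= 1.\<close>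
definition aoa :: "(nat \<Rightarrow> 'a \<Rightarrow> real) \<Rightarrow> (nat \<times> nat \<Rightarrow> nat \<Rightarrow> 'a::real_vector)
    \<Rightarrow> nat \<Rightarrow> 'a" where
  "aoa f wexp t = aoa_hist f wexp t t"

end

theory Submission
  imports Defs "HOL-Analysis.Analysis"
begin



lemma exp_sum_taylor4:
  fixes x :: real
  shows "\<exists>t. \<bar>t\<bar> \<le> \<bar>x\<bar> \<and> exp x = 1 + x + x^2/2 + x^3/6 + exp t / 24 * x^4"
proof -
  obtain t where "\<bar>t\<bar> \<le> \<bar>x\<bar>" "exp x = (\<Sum>m<4. (x ^ m) / fact m) + (exp t / fact 4) * x ^ 4"
    using Maclaurin_exp_le[of x 4] by blast
  moreover have "(\<Sum>m<4. (x ^ m) / fact m) = 1 + x + x^2/2 + x^3/6"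
    by (simp add: numeral_eq_Suc fact_numeral power2_eq_square power3_eq_cube)
  moreover have "(fact 4 :: real) = 24" by (simp add: fact_numeral)
  ultimately show ?thesis by auto
qed

lemma exp_ge_quad:
  fixes y :: real assumes "0 \<le> y"
  shows "1 + y + y^2/2 \<le> exp y"
proof -
  obtain t where "\<bar>t\<bar> \<le> \<bar>y\<bar>" "exp y = (\<Sum>m<3. (y ^ m) / fact m) + (exp t / fact 3) * y ^ 3"
    using Maclaurin_exp_le[of y 3] by blast
  moreover have "(\<Sum>m<3. (y ^ m) / fact m) = 1 + y + y^2/2"
    by (simp add: numeral_eq_Suc fact_numeral power2_eq_square)
  moreover have "0 \<le> (exp t / fact 3) * y ^ 3" using assms by simp
  ultimately show ?thesis by linarith
qed

lemma exp_one_le3: "exp (1::real) \<le> 3"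
  using e_less_272 by simp

lemma cosh_bound:
  fixes x :: real assumes "0 \<le> x" "x \<le> 1"
  shows "exp x + exp (-x) \<le> 2 * exp (x^2/2)"
proof -
  obtain t where t: "\<bar>t\<bar> \<le> \<bar>x\<bar>" "exp x = 1 + x + x^2/2 + x^3/6 + exp t / 24 * x^4"
    using exp_sum_taylor4 by blast
  obtain u where u: "\<bar>u\<bar> \<le> \<bar>-x\<bar>" "exp (-x) = 1 + (-x) + (-x)^2/2 + (-x)^3/6 + exp u / 24 * (-x)^4"
    using exp_sum_taylor4 by blast
  have et: "exp t \<le> 3" using t(1) assms exp_one_le3
    by (smt (verit) exp_le_cancel_iff)
  have eu: "exp u \<le> 3" using u(1) assms exp_one_le3
    by (smt (verit) exp_le_cancel_iff)
  have x4: "0 \<le> x^4" by simp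
  have "exp x + exp (-x) = 2 + x^2 + (exp t + exp u) / 24 * x^4"
    using t(2) u(2) by (simp add: power2_eq_square power3_eq_cube power4_eq_xxxx field_simps)
  also have "\<dots> \<le> 2 + x^2 + 6 / 24 * x^4"
    using et eu x4 by (intro add_left_mono mult_right_mono) auto
  also have "\<dots> = 2 * (1 + x^2/2 + (x^2/2)^2/2)"
    by (simp add: power2_eq_square power4_eq_xxxx field_simps)
  also have "\<dots> \<le> 2 * exp (x^2/2)"
    using exp_ge_quad[of "x^2/2"] by simp
  finally show ?thesis .
qed




lemma phi_ge1: assumes "0 \<le> C" shows "1 \<le> Phi R C"
proof -
  have "0 \<le> (max R 0)^2 / (3*C)" using assms by (intro divide_nonneg_nonneg) auto
  then show ?thesis unfolding Phi_def by (simp only: one_le_exp_iff)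
qed

lemma phi_pos: "0 < Phi R C"
  unfolding Phi_def by (rule exp_gt_zero)

lemma phi_mono: assumes "R \<le> R'" "0 \<le> C" shows "Phi R C \<le> Phi R' C"
proof -
  have "max R 0 \<le> max R' 0" using assms(1) by (rule max.mono) simp
  then have "(max R 0)^2 \<le> (max R' 0)^2" by (intro power_mono) auto
  then have "(max R 0)^2 / (3*C) \<le> (max R' 0)^2 / (3*C)" using assms by (intro divide_right_mono) auto
  then show ?thesis unfolding Phi_def by (simp only: exp_le_cancel_iff)
qed

lemma w_nonneg: assumes "0 \<le> C" shows "0 \<le> anh_weight R C"
proof -
  have "Phi (R - 1) (C + 1) \<le> Phi (R + 1) (C + 1)" using assms by (intro phi_mono) auto
  then show ?thesis unfolding anh_weight_def by (simp add: field_simps)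
qed

lemma w_pos00: "0 < anh_weight 0 0"
proof -
  have "Phi (0+1) (0+1) = exp (1/3)" unfolding Phi_def by simp
  moreover have "Phi (0-1) (0+1) = 1" unfolding Phi_def by simp
  moreover have "1 < exp (1/3::real)" by simp
  ultimately show ?thesis unfolding anh_weight_def by (simp add: field_simps)
qed

lemma exp_convex2: "0 \<le> s \<Longrightarrow> s \<le> 1 \<Longrightarrow> exp ((1 - s) * a + s * b) \<le> (1 - s) * exp a + s * exp (b::real)"
  using convex_onD[OF exp_convex, of s a b] by simp



lemma phi_convex2:
  assumes s: "0 \<le> s" "s \<le> 1" and y1: "0 \<le> y1" and y2: "0 < y2" and z: "y1 = 0 \<Longrightarrow> u1 \<le> 0"
  shows "Phi ((1-s)*u1 + s*u2) ((1-s)*y1 + s*y2) \<le> (1-s) * Phi u1 y1 + s * Phi u2 y2"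
proof (cases "s = 0")
  case True then show ?thesis by simp
next
  case False
  then have sp: "0 < s" using s by simp
  define p1 where "p1 = max u1 0"
  define p2 where "p2 = max u2 0"
  define q where "q = max ((1-s)*u1 + s*u2) 0"
  define m where "m = (1-s)*p1 + s*p2"
  define vv where "vv = (1-s)*y1 + s*y2"
  have vp: "0 < vv" unfolding vv_def using sp s y1 y2
    by (intro add_nonneg_pos mult_nonneg_nonneg mult_pos_pos) auto
  have q0: "0 \<le> q" unfolding q_def by simp
  have a1: "(1-s)*u1 \<le> (1-s)*p1" unfolding p1_def using s by (intro mult_left_mono) auto
  have a2: "s*u2 \<le> s*p2" unfolding p2_def using s by (intro mult_left_mono) auto
  have a3: "0 \<le> (1-s)*p1" "0 \<le> s*p2" unfolding p1_def p2_def using s by auto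
  have qm: "q \<le> m" unfolding q_def m_def using a1 a2 a3 by linarith
  have q2: "q^2 \<le> m^2" using q0 qm by (intro power_mono) auto
  have key: "m^2 / vv \<le> (1-s) * (p1^2/y1) + s * (p2^2/y2)"
  proof (cases "y1 = 0")
    case True
    then have "p1 = 0" using z unfolding p1_def by simp
    then show ?thesis using True sp y2 unfolding m_def vv_def by (simp add: power2_eq_square mult_ac)
  next
    case False
    then have v1p: "0 < y1" using y1 by simp
    have id: "((1-s)*p1^2*y2 + s*p2^2*y1) * vv - m^2 * (y1*y2) = (1-s) * s * (p1 * y2 - p2 * y1)^2"
      unfolding m_def vv_def by (simp add: power2_eq_square algebra_simps)
    have "0 \<le> (1-s) * s * (p1 * y2 - p2 * y1)^2" using s by simp
    then have "m^2 * (y1*y2) \<le> ((1-s)*p1^2*y2 + s*p2^2*y1) * vv" using id by linarith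
    then have "m^2 / vv \<le> ((1-s)*p1^2*y2 + s*p2^2*y1) / (y1*y2)"
      using vp v1p y2 by (simp add: divide_simps)
    also have "\<dots> = (1-s) * (p1^2/y1) + s * (p2^2/y2)"
      using v1p y2 by (simp add: field_simps)
    finally show ?thesis .
  qed
  have "q^2 / (3* vv) \<le> m^2/(3* vv)" using q2 vp by (intro divide_right_mono) auto
  also have "\<dots> = (m^2/ vv)/3" by simp
  also have "\<dots> \<le> ((1-s) * (p1^2/y1) + s * (p2^2/y2))/3" using key by (intro divide_right_mono) auto
  also have "\<dots> = (1-s) * (p1^2/(3*y1)) + s * (p2^2/(3*y2))" by (simp add: add_divide_distrib)
  finally have e: "q^2 / (3* vv) \<le> (1-s) * (p1^2/(3*y1)) + s * (p2^2/(3*y2))" .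
  have "Phi ((1-s)*u1 + s*u2) ((1-s)*y1 + s*y2) = exp (q^2/(3* vv))"
    unfolding Phi_def q_def vv_def by simp
  also have "\<dots> \<le> exp ((1-s) * (p1^2/(3*y1)) + s * (p2^2/(3*y2)))" using e by simp
  also have "\<dots> \<le> (1-s) * exp (p1^2/(3*y1)) + s * exp (p2^2/(3*y2))"
    using exp_convex2 s by blast
  also have "\<dots> = (1-s) * Phi u1 y1 + s * Phi u2 y2" unfolding Phi_def p1_def p2_def by simp
  finally show ?thesis .
qed




lemma exp_le_inv: assumes "0 \<le> x" "x < (1::real)" shows "exp x \<le> 1 / (1 - x)"
proof -
  have h: "1 - x \<le> exp (-x)" using exp_ge_add_one_self[of "-x"] by simp
  have "exp x * (1 - x) \<le> exp x * exp (-x)" using h by (intro mult_left_mono) auto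
  also have "\<dots> = 1" by (simp add: exp_minus)
  finally show ?thesis using assms by (simp add: divide_simps)
qed

lemma exp23: "exp (2/3::real) \<le> 3"
  using exp_le_inv[of "2/3"] by simp

lemma exp32: "exp (3/2::real) \<le> 6"
proof -
  have "exp (3/2::real) = exp 1 * exp (1/2)" by (simp add: exp_add[symmetric])
  also have "\<dots> \<le> 3 * 2"
  proof (rule mult_mono)
    show "exp (1::real) \<le> 3" using e_less_272 by simp
    show "exp (1/2::real) \<le> 2" using exp_le_inv[of "1/2"] by simp
  qed auto
  finally show ?thesis by simp
qed

lemma expm1_le: "exp z - 1 \<le> z * exp (z::real)"
proof -
  have "1 - z \<le> exp (-z)" using exp_ge_add_one_self[of "-z"] by simp
  then have "(1 - z) * exp z \<le> exp (-z) * exp z" by (intro mult_right_mono) auto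
  then show ?thesis by (simp add: exp_minus algebra_simps)
qed




lemma D_bound:
  assumes C0: "0 \<le> C" and RC: "\<bar>R\<bar> \<le> C"
  shows "Phi (R + 1) (C + 1) + Phi (R - 1) (C + 1) - 2 * Phi R C \<le> 4 / (C + 1)"
proof -
  define c where "c = C + 1"
  have c1: "1 \<le> c" using C0 unfolding c_def by simp
  have P0: "1 \<le> Phi R C" using C0 by (rule phi_ge1)
  consider "R \<le> -1" | "-1 < R \<and> R < 1" | "1 \<le> R" by linarith
  then show ?thesis
  proof cases
    case 1
    have "Phi (R + 1) (C + 1) = 1" "Phi (R - 1) (C + 1) = 1" unfolding Phi_def using 1 by auto
    moreover have "0 \<le> 4 / (C + 1)" using C0 by simp
    ultimately show ?thesis using P0 by linarith
  next
    case 2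
    define p where "p = R + 1"
    have p0: "0 < p" "p < 2" using 2 unfolding p_def by auto
    have pc: "p \<le> c" using RC unfolding p_def c_def by simp
    define z where "z = p^2 / (3 * c)"
    have e1: "Phi (R + 1) (C + 1) = exp z" unfolding Phi_def z_def p_def c_def using 2 by simp
    have e2: "Phi (R - 1) (C + 1) = 1" unfolding Phi_def using 2 by simp
    have pp: "p * p \<le> 2 * c" using p0 pc by (intro mult_mono) auto
    have z23: "z \<le> 2/3" unfolding z_def using pp c1 by (simp add: power2_eq_square divide_simps)
    have z0: "0 \<le> z" unfolding z_def using c1 by simp
    have ez: "exp z \<le> 3" using exp23 z23 by (meson exp_le_cancel_iff order_trans)
    have "exp z - 1 \<le> z * exp z" by (rule expm1_le)
    also have "\<dots> \<le> z * 3" using ez z0 by (intro mult_left_mono) auto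
    also have "\<dots> = p^2 / c" unfolding z_def using c1 by simp
    also have "\<dots> \<le> 4 / c" using p0 c1 by (intro divide_right_mono) (auto simp: power2_eq_square intro: mult_mono[of p 2 p 2, simplified])
    finally have "exp z - 1 \<le> 4 / c" .
    then show ?thesis using e1 e2 P0 unfolding c_def by linarith
  next
    case 3
    have Cp: "1 \<le> C" using 3 RC by simp
    define A where "A = R^2 / (3 * c)"
    define a where "a = 1 / (3 * c)"
    define x where "x = 2 * R / (3 * c)"
    define s where "s = R^2 / (9 * c^2)"
    have cpos: "0 < c" using c1 by simp
    have h1: "(R + 1)^2 / (3 * c) = A + a + x" unfolding A_def a_def x_def
      using cpos by (simp add: field_simps power2_eq_square)
    have h2: "(R - 1)^2 / (3 * c) = A + a - x" unfolding A_def a_def x_def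
      using cpos by (simp add: field_simps power2_eq_square)
    have E1: "Phi (R + 1) (C + 1) = exp (A + a + x)"
      unfolding Phi_def using 3 h1 c_def by simp
    have E2: "Phi (R - 1) (C + 1) = exp (A + a - x)"
      unfolding Phi_def using 3 h2 c_def by simp
    have x0: "0 \<le> x" unfolding x_def using 3 cpos by simp
    have x1: "x \<le> 1" unfolding x_def using cpos RC 3 c_def by (simp add: divide_simps)
    have xs: "x^2 / 2 = 2 * s" unfolding x_def s_def using cpos by (simp add: field_simps power2_eq_square)
    have "exp (A + a + x) + exp (A + a - x) = exp (A + a) * (exp x + exp (-x))"
      by (simp add: exp_add[symmetric] exp_diff algebra_simps exp_minus divide_inverse)
    also have "\<dots> \<le> exp (A + a) * (2 * exp (x^2/2))"
      using cosh_bound[OF x0 x1] by (intro mult_left_mono) auto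
    also have "\<dots> = 2 * exp (A + a + 2 * s)" using xs by (simp add: exp_add)
    finally have S1: "exp (A + a + x) + exp (A + a - x) \<le> 2 * exp (A + a + 2 * s)" .
    have "A + 3 * s \<le> R^2 / (3 * C)"
    proof -
      have cc0: "0 \<le> C * C" by simp
      have cc: "0 < 1 + (C * C + C * 2)" using cc0 Cp by linarith
      have q: "(c + 1) / c^2 \<le> 1 / C"
        using Cp cc unfolding c_def by (simp add: divide_simps power2_eq_square algebra_simps)
      have "A + 3 * s = R^2 / 3 * ((c + 1) / c^2)" unfolding A_def s_def using cpos
        by (simp add: field_simps power2_eq_square)
      also have "\<dots> \<le> R^2 / 3 * (1 / C)" using q by (intro mult_left_mono) auto
      also have "\<dots> = R^2 / (3 * C)" by simp
      finally show ?thesis .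
    qed
    then have S2: "exp (A + 3 * s) \<le> Phi R C" unfolding Phi_def using 3 by simp
    have "Phi (R + 1) (C + 1) + Phi (R - 1) (C + 1) - 2 * Phi R C
          \<le> 2 * exp (A + a + 2 * s) - 2 * exp (A + 3 * s)" using E1 E2 S1 S2 by linarith
    also have "\<dots> \<le> 4 / c"
    proof (cases "a \<le> s")
      case True
      then have "exp (A + a + 2 * s) \<le> exp (A + 3 * s)" by simp
      moreover have "0 \<le> 4 / c" using cpos by simp
      ultimately show ?thesis by linarith
    next
      case False
      have As: "A = 3 * c * s" unfolding A_def s_def using cpos by (simp add: field_simps power2_eq_square)
      have A1: "A < 1" using False cpos unfolding As a_def
        by (simp add: divide_simps mult.commute)
      have a6: "a \<le> 1/6" unfolding a_def using c1 Cp c_def by (simp add: divide_simps)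
      have s0: "0 \<le> s" unfolding s_def by simp
      have "exp (A + 3 * s) \<ge> exp (A + 2 * s)" using s0 by simp
      then have "2 * exp (A + a + 2 * s) - 2 * exp (A + 3 * s) \<le> 2 * (exp (A + 2 * s) * (exp a - 1))"
        by (simp add: exp_add algebra_simps)
      also have "\<dots> \<le> 2 * (exp (A + 2 * s) * (a * exp a))"
        using expm1_le[of a] by (intro mult_left_mono) auto
      also have "\<dots> = 2 * a * exp (A + 2 * s + a)" by (simp add: exp_add)
      also have "\<dots> \<le> 2 * a * 6"
      proof (intro mult_left_mono)
        have "A + 2 * s + a \<le> 3/2" using A1 False a6 by linarith
        then show "exp (A + 2 * s + a) \<le> 6" using exp32 by (meson exp_le_cancel_iff order_trans)
        show "0 \<le> 2 * a" unfolding a_def using cpos by simp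
      qed
      also have "\<dots> = 4 / c" unfolding a_def by simp
      finally show ?thesis .
    qed
    finally show ?thesis unfolding c_def .
  qed
qed




lemma phi_step:
  fixes R C r :: real
  assumes C0: "0 \<le> C" and RC: "\<bar>R\<bar> \<le> C" and r1: "\<bar>r\<bar> \<le> 1"
  shows "Phi (R + r) (C + \<bar>r\<bar>) \<le> Phi R C + anh_weight R C * r + 2 * \<bar>r\<bar> / (C + 1)"
proof -
  have z: "C = 0 \<Longrightarrow> R \<le> 0" using RC by simp
  have Cp: "0 < C + 1" using C0 by simp
  have D: "Phi (R + 1) (C + 1) + Phi (R - 1) (C + 1) - 2 * Phi R C \<le> 4 / (C + 1)"
    using D_bound[OF C0 RC] .
  show ?thesis
  proof (cases "0 \<le> r")
    case True
    have "Phi ((1 - r) * R + r * (R + 1)) ((1 - r) * C + r * (C + 1))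
          \<le> (1 - r) * Phi R C + r * Phi (R + 1) (C + 1)"
      using True r1 C0 Cp z by (intro phi_convex2) auto
    moreover have "(1 - r) * R + r * (R + 1) = R + r" by (simp add: algebra_simps)
    moreover have "(1 - r) * C + r * (C + 1) = C + \<bar>r\<bar>" using True by (simp add: algebra_simps)
    ultimately have h: "Phi (R + r) (C + \<bar>r\<bar>) \<le> Phi R C + r * (Phi (R + 1) (C + 1) - Phi R C)"
      by (simp add: algebra_simps)
    have "Phi (R + 1) (C + 1) - Phi R C \<le> anh_weight R C + 2 / (C + 1)"
      using D unfolding anh_weight_def by (simp add: field_simps)
    then have "r * (Phi (R + 1) (C + 1) - Phi R C) \<le> r * (anh_weight R C + 2 / (C + 1))"
      using True by (intro mult_left_mono) auto
    then show ?thesis using h True by (simp add: algebra_simps)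
  next
    case False
    define s where "s = - r"
    have s0: "0 \<le> s" "s \<le> 1" using False r1 unfolding s_def by auto
    have "Phi ((1 - s) * R + s * (R - 1)) ((1 - s) * C + s * (C + 1))
          \<le> (1 - s) * Phi R C + s * Phi (R - 1) (C + 1)"
      using s0 C0 Cp z by (intro phi_convex2) auto
    moreover have "(1 - s) * R + s * (R - 1) = R + r" unfolding s_def by (simp add: algebra_simps)
    moreover have "(1 - s) * C + s * (C + 1) = C + \<bar>r\<bar>" using False unfolding s_def by (simp add: algebra_simps)
    ultimately have h: "Phi (R + r) (C + \<bar>r\<bar>) \<le> Phi R C + s * (Phi (R - 1) (C + 1) - Phi R C)"
      by (simp add: algebra_simps)
    have "Phi (R - 1) (C + 1) - Phi R C \<le> - anh_weight R C + 2 / (C + 1)"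
      using D unfolding anh_weight_def by (simp add: field_simps)
    then have "s * (Phi (R - 1) (C + 1) - Phi R C) \<le> s * (- anh_weight R C + 2 / (C + 1))"
      using s0 by (intro mult_left_mono) auto
    moreover have "\<bar>r\<bar> = s" using False unfolding s_def by simp
    ultimately show ?thesis using h unfolding s_def by (simp add: algebra_simps)
  qed
qed

lemma ln_tele:
  fixes x C :: real
  assumes "0 \<le> x" "x \<le> 1" "0 \<le> C"
  shows "x / (C + 1) \<le> 2 * (ln (1 + (C + x)) - ln (1 + C))"
proof -
  define y where "y = x / (C + 1)"
  have y0a: "0 \<le> y" unfolding y_def using assms by (intro divide_nonneg_nonneg) auto
  have y0b: "y \<le> 1" unfolding y_def using assms by (simp add: divide_simps)
  note y0 = y0a y0b
  have "exp (y / 2) = exp ((1 - y) * 0 + y * (1/2))" by simp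
  also have "\<dots> \<le> (1 - y) * exp 0 + y * exp (1/2)" using y0 by (rule exp_convex2)
  also have "\<dots> \<le> (1 - y) * 1 + y * 2"
    using y0 exp_le_inv[of "1/2"] by (intro add_mono mult_left_mono) auto
  finally have "exp (y / 2) \<le> 1 + y" by simp
  then have "ln (exp (y / 2)) \<le> ln (1 + y)" using y0 by (subst ln_le_cancel_iff) auto
  then have "y / 2 \<le> ln (1 + y)" by simp
  also have "1 + y = (1 + (C + x)) / (1 + C)" unfolding y_def using assms by (simp add: field_simps)
  also have "ln \<dots> = ln (1 + (C + x)) - ln (1 + C)" using assms by (simp add: ln_div)
  finally have "y / 2 \<le> ln (1 + (C + x)) - ln (1 + C)" .
  then have "y \<le> 2 * (ln (1 + (C + x)) - ln (1 + C))" by (simp add: field_simps)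
  then show ?thesis unfolding y_def .
qed

definition Psi :: "real \<Rightarrow> real \<Rightarrow> real" where
  "Psi R C = Phi R C - 4 * ln (1 + C)"

lemma psi_step:
  fixes R C r :: real
  assumes C0: "0 \<le> C" and RC: "\<bar>R\<bar> \<le> C" and r1: "\<bar>r\<bar> \<le> 1"
  shows "Psi (R + r) (C + \<bar>r\<bar>) \<le> Psi R C + anh_weight R C * r"
  using phi_step[OF assms] ln_tele[of "\<bar>r\<bar>" C] assms unfolding Psi_def by simp

lemma psi00: "Psi 0 0 = 1"
  unfolding Psi_def Phi_def by simp




lemma GC_fst: "I \<in> GC \<Longrightarrow> 1 \<le> fst I"
  unfolding GC_def by auto

lemma GC_le: "I \<in> GC \<Longrightarrow> fst I \<le> snd I"
proof -
  assume "I \<in> GC"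
  then obtain i k where I: "I = (i * 2 ^ k, (i + 1) * 2 ^ k - 1)" "1 \<le> i" unfolding GC_def by auto
  have h: "i * 2 ^ k + 1 \<le> (i + 1) * (2::nat) ^ k" by (simp add: algebra_simps)
  have "fst I = i * 2 ^ k" "snd I = (i + 1) * 2 ^ k - 1" using I by auto
  then show ?thesis using h by linarith
qed

lemma GC_single: assumes "1 \<le> t" shows "(t, t) \<in> GC"
proof -
  have "(t, t) = (t * 2 ^ 0, (t + 1) * 2 ^ 0 - 1)" by simp
  then show ?thesis unfolding GC_def using assms by blast
qed

lemma created_sub: "{I \<in> GC. fst I \<le> t} \<subseteq> (\<lambda>(i, k). (i * 2 ^ k, (i + 1) * 2 ^ k - 1)) ` ({1..t} \<times> {..t})"
proof
  fix I assume "I \<in> {I \<in> GC. fst I \<le> t}"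
  then obtain i k where I: "I = (i * 2 ^ k, (i + 1) * 2 ^ k - 1)" "1 \<le> i" "i * 2 ^ k \<le> t"
    unfolding GC_def by auto
  have "i \<le> i * 2 ^ k" by simp
  then have it: "i \<le> t" using I by linarith
  have "k < 2 ^ k" by (rule less_exp)
  also have "(2::nat) ^ k \<le> i * 2 ^ k" using I by simp
  finally have kt: "k \<le> t" using I by linarith
  show "I \<in> (\<lambda>(i, k). (i * 2 ^ k, (i + 1) * 2 ^ k - 1)) ` ({1..t} \<times> {..t})"
    using I it kt by (intro image_eqI[of _ _ "(i, k)"]) auto
qed

lemma created_finite: "finite {I \<in> GC. fst I \<le> t}"
  by (rule finite_subset[OF created_sub]) auto

lemma active_sub: "active t \<subseteq> {I \<in> GC. fst I \<le> t}"
  unfolding active_def by auto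

lemma active_finite: "finite (active t)"
  using finite_subset[OF active_sub created_finite] .

lemma hist: "1 \<le> u \<Longrightarrow> u \<le> t \<Longrightarrow> aoa_hist f wexp t u = aoa f wexp u"
proof (induction t)
  case 0 then show ?case by simp
next
  case (Suc t)
  show ?case
  proof (cases "u = Suc t")
    case True then show ?thesis unfolding aoa_def by simp
  next
    case False then show ?thesis using Suc by simp
  qed
qed

lemma step_cong:
  assumes "\<And>u. 1 \<le> u \<Longrightarrow> u < t \<Longrightarrow> h u = h' u"
  shows "aoa_step f wexp h t = aoa_step f wexp h' t"
proof -
  have R: "regR f h wexp I t = regR f h' wexp I t" if "I \<in> active t" for I
  proof -
    have "1 \<le> fst I" using that GC_fst unfolding active_def by auto
    then show ?thesis unfolding regR_def using assms by (intro sum.cong) auto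
  qed
  have C: "regC f h wexp I t = regC f h' wexp I t" if "I \<in> active t" for I
  proof -
    have "1 \<le> fst I" using that GC_fst unfolding active_def by auto
    then show ?thesis unfolding regC_def using assms by (intro sum.cong) auto
  qed
  have W: "anh_weight (regR f h wexp I t) (regC f h wexp I t) = anh_weight (regR f h' wexp I t) (regC f h' wexp I t)"
    if "I \<in> active t" for I using R[OF that] C[OF that] by simp
  have Z: "(\<Sum>I\<in>active t. anh_weight (regR f h wexp I t) (regC f h wexp I t))
        = (\<Sum>I\<in>active t. anh_weight (regR f h' wexp I t) (regC f h' wexp I t))"
    using W by (rule sum.cong[OF refl])
  show ?thesis unfolding aoa_step_def Let_def Z using W
    by (intro sum.cong refl) simp
qed

lemma aoa_Suc: "aoa f wexp (Suc t) = aoa_step f wexp (aoa f wexp) (Suc t)"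
proof -
  have "aoa f wexp (Suc t) = aoa_step f wexp (aoa_hist f wexp t) (Suc t)"
    unfolding aoa_def by simp
  also have "\<dots> = aoa_step f wexp (aoa f wexp) (Suc t)"
    by (rule step_cong) (simp add: hist)
  finally show ?thesis .
qed




lemma e_ge: "8/3 \<le> exp (1::real)"
  using e_approx_32 unfolding abs_le_iff by (simp add: inverse_eq_divide)

lemma final_arith:
  fixes R C n M l :: real
  assumes RC: "\<bar>R\<bar> \<le> C" and Cn: "C \<le> n" and M1: "1 \<le> M" and l0: "0 \<le> l"
    and P: "Phi R C \<le> M * (1 + 4 * l)"
  shows "R \<le> sqrt (3 * n * (1 + ln M + ln ((5 + 3 * l) / 2)))"
proof -
  define L where "L = 1 + ln M + ln ((5 + 3 * l) / 2)"
  have lnM: "0 \<le> ln M" using M1 by simp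
  have q1: "1 \<le> (5 + 3 * l) / 2" using l0 by simp
  then have lnq: "0 \<le> ln ((5 + 3 * l) / 2)" by simp
  have L0: "0 \<le> L" unfolding L_def using lnM lnq by simp
  have n0: "0 \<le> n" using RC Cn by simp
  show ?thesis
  proof (cases "R \<le> 0")
    case True
    have "0 \<le> sqrt (3 * n * L)" using L0 n0 by simp
    then show ?thesis using True unfolding L_def by linarith
  next
    case False
    then have Rp: "0 < R" by simp
    then have Cp: "0 < C" using RC by simp
    have "Phi R C = exp (R^2 / (3 * C))" unfolding Phi_def using Rp by simp
    have "exp L = exp 1 * M * ((5 + 3 * l) / 2)" unfolding L_def using M1 q1
      by (simp add: exp_add)
    have e8: "1 + 4 * l \<le> exp 1 * ((5 + 3 * l) / 2)"
    proof -
      have "8 * l \<le> 3 * exp 1 * l" using e_ge l0 by (intro mult_right_mono) auto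
      then show ?thesis using e_ge by (simp add: algebra_simps)
    qed
    have "exp (R^2 / (3 * C)) \<le> M * (1 + 4 * l)" using P \<open>Phi R C = _\<close> by simp
    also have "\<dots> \<le> M * (exp 1 * ((5 + 3 * l) / 2))" using e8 M1 by (intro mult_left_mono) auto
    also have "\<dots> = exp L" using \<open>exp L = _\<close> by simp
    finally have "R^2 / (3 * C) \<le> L" by simp
    then have "R^2 \<le> 3 * C * L" using Cp by (simp add: divide_simps mult.commute mult.left_commute)
    also have "\<dots> \<le> 3 * n * L" using Cn L0 by (intro mult_right_mono) auto
    finally show ?thesis unfolding L_def by (rule real_le_rsqrt)
  qed
qed

lemma regC_nonneg: "0 \<le> regC f h wexp I t"
  unfolding regC_def by (intro sum_nonneg) auto

locale aoa_setting =
  fixes Om :: "'a::real_vector set" and f :: "nat \<Rightarrow> 'a \<Rightarrow> real"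
    and wexp :: "nat \<times> nat \<Rightarrow> nat \<Rightarrow> 'a"
  assumes cvx: "convex Om" and fcvx: "\<And>t. convex_on Om (f t)"
    and fb: "\<And>t w. w \<in> Om \<Longrightarrow> 0 \<le> f t w \<and> f t w \<le> 1"
    and win: "\<And>I t. I \<in> GC \<Longrightarrow> fst I \<le> t \<Longrightarrow> t \<le> snd I \<Longrightarrow> wexp I t \<in> Om"
begin

definition rr where "rr I u = f u (aoa f wexp u) - f u (wexp I u)"
definition Wt where "Wt t I = anh_weight (regR f (aoa f wexp) wexp I t) (regC f (aoa f wexp) wexp I t)"

lemma round:
  assumes t1: "1 \<le> t"
  shows "aoa f wexp t \<in> Om \<and> (\<Sum>I\<in>active t. Wt t I * rr I t) \<le> 0"
proof -
  obtain T where tT: "t = Suc T" using t1 by (cases t) auto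
  define W where "W = Wt t"
  define Z where "Z = (\<Sum>I\<in>active t. W I)"
  have eq: "aoa f wexp t = (\<Sum>I\<in>active t. (W I / Z) *\<^sub>R wexp I t)"
    unfolding tT aoa_Suc unfolding aoa_step_def Let_def W_def Wt_def Z_def tT ..
  have Wnn: "0 \<le> W I" for I unfolding W_def Wt_def by (intro w_nonneg regC_nonneg)
  have tt: "(t, t) \<in> active t" unfolding active_def using GC_single[OF t1] by simp
  have Wtt: "W (t, t) = anh_weight 0 0" unfolding W_def Wt_def regR_def regC_def by simp
  have fin: "finite (active t)" by (rule active_finite)
  have "W (t, t) \<le> Z" unfolding Z_def using fin tt Wnn by (intro member_le_sum) auto
  then have Zp: "0 < Z" using Wtt w_pos00 by simp
  have s1: "(\<Sum>I\<in>active t. W I / Z) = 1" using Zp unfolding Z_def by (simp add: sum_divide_distrib[symmetric])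
  have nn: "\<And>I. I \<in> active t \<Longrightarrow> 0 \<le> W I / Z" using Wnn Zp by simp
  have inO: "\<And>I. I \<in> active t \<Longrightarrow> wexp I t \<in> Om" unfolding active_def using win by auto
  have mem: "aoa f wexp t \<in> Om" unfolding eq using fin cvx s1 nn inO by (rule convex_sum)
  have jen: "f t (aoa f wexp t) \<le> (\<Sum>I\<in>active t. (W I / Z) * f t (wexp I t))"
    unfolding eq using fin tt fcvx s1 nn inO by (intro convex_on_sum) auto
  have eqA: "(\<Sum>I\<in>active t. W I * f t (aoa f wexp t)) = Z * f t (aoa f wexp t)"
    unfolding Z_def by (simp add: sum_distrib_right)
  have "(\<Sum>I\<in>active t. Wt t I * rr I t) = (\<Sum>I\<in>active t. W I * f t (aoa f wexp t)) - (\<Sum>I\<in>active t. W I * f t (wexp I t))"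
    unfolding rr_def W_def by (simp add: right_diff_distrib sum_subtractf)
  also have "\<dots> = Z * f t (aoa f wexp t) - (\<Sum>I\<in>active t. W I * f t (wexp I t))"
    unfolding eqA ..
  also have "\<dots> \<le> Z * (\<Sum>I\<in>active t. (W I / Z) * f t (wexp I t)) - (\<Sum>I\<in>active t. W I * f t (wexp I t))"
    using jen Zp by simp
  also have "\<dots> = 0" using Zp by (simp add: sum_distrib_left)
  finally show ?thesis using mem by simp
qed

lemma rr_bound:
  assumes "I \<in> GC" "fst I \<le> u" "u \<le> snd I"
  shows "\<bar>rr I u\<bar> \<le> 1"
proof -
  have "1 \<le> u" using GC_fst[OF assms(1)] assms(2) by simp
  then have "aoa f wexp u \<in> Om" using round by blast
  moreover have "wexp I u \<in> Om" using win assms by blast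
  ultimately show ?thesis unfolding rr_def using fb by (smt (verit))
qed

end



context aoa_setting begin

definition Rh where "Rh I T = (\<Sum>u\<in>{fst I..min T (snd I)}. rr I u)"
definition Ch where "Ch I T = (\<Sum>u\<in>{fst I..min T (snd I)}. \<bar>rr I u\<bar>)"
definition Pot where "Pot T = (\<Sum>I\<in>{I \<in> GC. fst I \<le> T}. Psi (Rh I T) (Ch I T))"

lemma Ch_nonneg: "0 \<le> Ch I T"
  unfolding Ch_def by (intro sum_nonneg) auto

lemma Rh_Ch: "\<bar>Rh I T\<bar> \<le> Ch I T"
  unfolding Rh_def Ch_def by (rule sum_abs)

lemma one_step:
  assumes I: "I \<in> GC" "fst I \<le> Suc T"
  shows "Psi (Rh I (Suc T)) (Ch I (Suc T)) \<le> Psi (Rh I T) (Ch I T)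
           + (if I \<in> active (Suc T) then Wt (Suc T) I * rr I (Suc T) else 0)"
proof (cases "I \<in> active (Suc T)")
  case True
  then have sS: "Suc T \<le> snd I" unfolding active_def by simp
  have m1: "min T (snd I) = T" "min (Suc T) (snd I) = Suc T" using sS by auto
  have set: "{fst I..Suc T} = insert (Suc T) {fst I..T}" using I(2) by (simp add: atLeastAtMostSuc_conv)
  have R1: "Rh I (Suc T) = Rh I T + rr I (Suc T)" unfolding Rh_def m1 set by simp
  have C1: "Ch I (Suc T) = Ch I T + \<bar>rr I (Suc T)\<bar>" unfolding Ch_def m1 set by simp
  have lt: "{fst I..T} = {fst I..<Suc T}" by auto
  have RR: "Rh I T = regR f (aoa f wexp) wexp I (Suc T)"
    unfolding Rh_def regR_def m1 lt rr_def ..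
  have CC: "Ch I T = regC f (aoa f wexp) wexp I (Suc T)"
    unfolding Ch_def regC_def m1 lt rr_def ..
  have r1: "\<bar>rr I (Suc T)\<bar> \<le> 1" using rr_bound I sS by blast
  have "Psi (Rh I (Suc T)) (Ch I (Suc T)) \<le> Psi (Rh I T) (Ch I T) + anh_weight (Rh I T) (Ch I T) * rr I (Suc T)"
    unfolding R1 C1 using Ch_nonneg Rh_Ch r1 by (rule psi_step)
  then show ?thesis using True unfolding Wt_def RR CC by simp
next
  case False
  then have "snd I \<le> T" using I unfolding active_def by auto
  then have "min (Suc T) (snd I) = min T (snd I)" by simp
  then show ?thesis using False unfolding Rh_def Ch_def by simp
qed

lemma potential: "Pot T \<le> real (card {I \<in> GC. fst I \<le> T})"
proof (induction T)
  case 0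
  have E0: "{I \<in> GC. fst I \<le> 0} = {}" using GC_fst by fastforce
  show ?case unfolding Pot_def E0 by simp
next
  case (Suc T)
  define cT where "cT = {I \<in> GC. fst I \<le> T}"
  define cS where "cS = {I \<in> GC. fst I \<le> Suc T}"
  define N where "N = {I \<in> GC. fst I = Suc T}"
  have un: "cS = cT \<union> N" unfolding cS_def cT_def N_def by auto
  have dis: "cT \<inter> N = {}" unfolding cT_def N_def by auto
  have fS: "finite cS" unfolding cS_def by (rule created_finite)
  have fT: "finite cT" unfolding cT_def by (rule created_finite)
  have fN: "finite N" using fS un by simp
  have actS: "cS \<inter> active (Suc T) = active (Suc T)" unfolding cS_def active_def by auto
  define g0 where "g0 I = Psi (Rh I T) (Ch I T)" for I
  define d where "d I = (if I \<in> active (Suc T) then Wt (Suc T) I * rr I (Suc T) else 0)" for I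
  have "Pot (Suc T) = (\<Sum>I\<in>cS. Psi (Rh I (Suc T)) (Ch I (Suc T)))" unfolding Pot_def cS_def ..
  also have "\<dots> \<le> (\<Sum>I\<in>cS. g0 I + d I)"
    unfolding g0_def d_def cS_def by (intro sum_mono one_step) auto
  also have "\<dots> = (\<Sum>I\<in>cS. g0 I) + (\<Sum>I\<in>cS. d I)" by (rule sum.distrib)
  also have "(\<Sum>I\<in>cS. d I) = (\<Sum>I\<in>active (Suc T). Wt (Suc T) I * rr I (Suc T))"
    unfolding d_def using sum.inter_restrict[OF fS, of "\<lambda>I. Wt (Suc T) I * rr I (Suc T)" "active (Suc T)"] actS
    by simp
  also have "\<dots> \<le> 0" using round[of "Suc T"] by simp
  also have "(\<Sum>I\<in>cS. g0 I) = (\<Sum>I\<in>cT. g0 I) + (\<Sum>I\<in>N. g0 I)"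
    unfolding un using fT fN dis by (rule sum.union_disjoint)
  also have "(\<Sum>I\<in>N. g0 I) = real (card N)"
  proof -
    have "\<And>I. I \<in> N \<Longrightarrow> g0 I = 1" unfolding g0_def N_def Rh_def Ch_def using psi00 by simp
    then show ?thesis by simp
  qed
  also have "(\<Sum>I\<in>cT. g0 I) = Pot T" unfolding Pot_def cT_def g0_def ..
  finally have "Pot (Suc T) \<le> Pot T + real (card N)" by simp
  also have "\<dots> \<le> real (card cT) + real (card N)" using Suc.IH unfolding cT_def by simp
  also have "\<dots> = real (card cS)" unfolding un using card_Un_disjoint[OF fT fN dis] by simp
  finally show ?case unfolding cS_def .
qed

end



context aoa_setting begin

lemma Ch_le_card:
  assumes "I \<in> GC"
  shows "Ch I T \<le> real (card {fst I..min T (snd I)})"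
proof -
  have "Ch I T \<le> of_nat (card {fst I..min T (snd I)}) * 1"
    unfolding Ch_def using rr_bound[OF assms] by (intro sum_bounded_above) auto
  then show ?thesis by simp
qed

lemma main_bound:
  assumes J: "(i, j) \<in> GC"
  shows "(\<Sum>t=i..j. f t (aoa f wexp t)) - (\<Sum>t=i..j. f t (wexp (i, j) t))
           \<le> sqrt (3 * real (j - i + 1) * (1 + ln (real (m' j)) + ln ((5 + 3 * ln (1 + real j)) / 2)))"
proof -
  define cj where "cj = {I \<in> GC. fst I \<le> j}"
  have ij: "i \<le> j" using GC_le[OF J] by simp
  have i1: "1 \<le> i" using GC_fst[OF J] by simp
  have Jc: "(i, j) \<in> cj" unfolding cj_def using J ij by simp
  have fc: "finite cj" unfolding cj_def by (rule created_finite)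
  have M1: "1 \<le> real (m' j)"
  proof -
    have "card cj \<noteq> 0" using fc Jc by auto
    then show ?thesis unfolding m'_def cj_def by simp
  qed
  have LHS: "(\<Sum>t=i..j. f t (aoa f wexp t)) - (\<Sum>t=i..j. f t (wexp (i, j) t)) = Rh (i, j) j"
    unfolding Rh_def rr_def by (simp add: sum_subtractf)
  have CJ: "Ch (i, j) j \<le> real (j - i + 1)"
    using Ch_le_card[OF J, of j] ij by simp
  have CI: "Ch I j \<le> real j" if "I \<in> cj" for I
  proof -
    have IG: "I \<in> GC" using that unfolding cj_def by simp
    have "1 \<le> fst I" using GC_fst[OF IG] .
    then have "card {fst I..min j (snd I)} \<le> j" by simp
    then show ?thesis using Ch_le_card[OF IG, of j] by linarith
  qed
  have "(\<Sum>I\<in>cj. Phi (Rh I j) (Ch I j)) = Pot j + (\<Sum>I\<in>cj. 4 * ln (1 + Ch I j))"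
    unfolding Pot_def cj_def Psi_def by (simp add: sum_subtractf)
  also have "\<dots> \<le> real (m' j) + (\<Sum>I\<in>cj. 4 * ln (1 + real j))"
  proof (intro add_mono sum_mono)
    show "Pot j \<le> real (m' j)" using potential unfolding m'_def .
    fix I assume "I \<in> cj"
    then have "Ch I j \<le> real j" by (rule CI)
    moreover have "0 \<le> Ch I j" by (rule Ch_nonneg)
    ultimately show "4 * ln (1 + Ch I j) \<le> 4 * ln (1 + real j)" by simp
  qed
  also have "\<dots> = real (m' j) * (1 + 4 * ln (1 + real j))"
    unfolding m'_def cj_def by (simp add: algebra_simps)
  finally have S: "(\<Sum>I\<in>cj. Phi (Rh I j) (Ch I j)) \<le> real (m' j) * (1 + 4 * ln (1 + real j))" .
  have "Phi (Rh (i, j) j) (Ch (i, j) j) \<le> (\<Sum>I\<in>cj. Phi (Rh I j) (Ch I j))"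
    using fc Jc by (intro member_le_sum) (auto intro: less_imp_le[OF phi_pos])
  with S have P: "Phi (Rh (i, j) j) (Ch (i, j) j) \<le> real (m' j) * (1 + 4 * ln (1 + real j))" by simp
  have "Rh (i, j) j \<le> sqrt (3 * real (j - i + 1) * (1 + ln (real (m' j)) + ln ((5 + 3 * ln (1 + real j)) / 2)))"
    using final_arith[OF Rh_Ch CJ M1 _ P] by simp
  then show ?thesis unfolding LHS .
qed

end

lemma m'_bound:
  assumes j1: "1 \<le> j"
  shows "real (m' j) \<le> real j * (1 + log 2 (real j))"
proof -
  define K where "K = {k. (2::nat) ^ k \<le> j}"
  define n where "n = nat \<lfloor>log 2 (real j)\<rfloor>"
  have Ksub: "K \<subseteq> {..n}"
  proof
    fix k assume "k \<in> K"
    then have "real k \<le> log 2 (real j)" unfolding K_def using le_log2_of_power by blast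
    then have "int k \<le> \<lfloor>log 2 (real j)\<rfloor>" by linarith
    then show "k \<in> {..n}" unfolding n_def by simp
  qed
  have fK: "finite K" using Ksub finite_subset by blast
  have cK: "real (card K) \<le> 1 + log 2 (real j)"
  proof -
    have "card K \<le> Suc n" using card_mono[OF _ Ksub] by simp
    moreover have "0 \<le> log 2 (real j)" using j1 by simp
    then have "real n \<le> log 2 (real j)" unfolding n_def by linarith
    ultimately show ?thesis by linarith
  qed
  have sub: "{I \<in> GC. fst I \<le> j} \<subseteq> (\<lambda>(i, k). (i * 2 ^ k, (i + 1) * 2 ^ k - 1)) ` ({1..j} \<times> K)"
  proof
    fix I assume "I \<in> {I \<in> GC. fst I \<le> j}"
    then obtain i k where I: "I = (i * 2 ^ k, (i + 1) * 2 ^ k - 1)" "1 \<le> i" "i * 2 ^ k \<le> j"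
      unfolding GC_def by auto
    have "i \<le> i * 2 ^ k" by simp
    then have it: "i \<le> j" using I by linarith
    have "(2::nat) ^ k \<le> i * 2 ^ k" using I by simp
    then have "(2::nat) ^ k \<le> j" using I(3) by (rule order_trans)
    then have kt: "k \<in> K" unfolding K_def by simp
    show "I \<in> (\<lambda>(i, k). (i * 2 ^ k, (i + 1) * 2 ^ k - 1)) ` ({1..j} \<times> K)"
      using I it kt by (intro image_eqI[of _ _ "(i, k)"]) auto
  qed
  have "m' j \<le> card ((\<lambda>(i, k). (i * 2 ^ k, (i + 1) * 2 ^ k - 1)) ` ({1..j} \<times> K))"
    unfolding m'_def using fK by (intro card_mono[OF _ sub]) auto
  also have "\<dots> \<le> card ({1..j} \<times> K)" by (rule card_image_le) (use fK in auto)
  also have "\<dots> = j * card K" by (simp add: card_cartesian_product)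
  finally have "real (m' j) \<le> real j * real (card K)" by (metis of_nat_le_iff of_nat_mult)
  also have "\<dots> \<le> real j * (1 + log 2 (real j))" using cK by (intro mult_left_mono) auto
  finally show ?thesis .
qed

lemma m'_pos: "1 \<le> j \<Longrightarrow> 1 \<le> m' j"
proof -
  assume j: "1 \<le> j"
  have "(1, 1) \<in> {I \<in> GC. fst I \<le> j}" using GC_single[of 1] j by simp
  then have "card {I \<in> GC. fst I \<le> j} \<noteq> 0" using created_finite by auto
  then show ?thesis unfolding m'_def by simp
qed

theorem lemma8:
  fixes \<Omega> :: "'a::real_vector set"
    and f :: "nat \<Rightarrow> 'a \<Rightarrow> real"
    and wexp :: "nat \<times> nat \<Rightarrow> nat \<Rightarrow> 'a"
    and i j :: nat
  assumes "convex \<Omega>"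
    and "\<And>t. convex_on \<Omega> (f t)"
    and "\<And>t w. w \<in> \<Omega> \<Longrightarrow> 0 \<le> f t w \<and> f t w \<le> 1"
    and "\<And>I t. I \<in> GC \<Longrightarrow> fst I \<le> t \<Longrightarrow> t \<le> snd I \<Longrightarrow> wexp I t \<in> \<Omega>"
    and "(i, j) \<in> GC"
  shows "(\<Sum>t=i..j. f t (aoa f wexp t)) - (\<Sum>t=i..j. f t (wexp (i, j) t))
           \<le> sqrt (3 * real (j - i + 1)
                 * (1 + ln (real (m' j)) + ln ((5 + 3 * ln (1 + real j)) / 2)))
       \<and> 1 + ln (real (m' j)) + ln ((5 + 3 * ln (1 + real j)) / 2)
           \<le> 1 + ln (real j) + ln (1 + log 2 (real j)) + ln ((5 + 3 * ln (1 + real j)) / 2)"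
proof
  interpret aoa_setting \<Omega> f wexp using assms(1-4) by unfold_locales auto
  show "(\<Sum>t=i..j. f t (aoa f wexp t)) - (\<Sum>t=i..j. f t (wexp (i, j) t))
           \<le> sqrt (3 * real (j - i + 1)
                 * (1 + ln (real (m' j)) + ln ((5 + 3 * ln (1 + real j)) / 2)))"
    using assms(5) by (rule main_bound)
next
  have j1: "1 \<le> j" using GC_fst[OF assms(5)] GC_le[OF assms(5)] by simp
  have m1: "1 \<le> real (m' j)" using m'_pos[OF j1] by simp
  have l0: "0 \<le> log 2 (real j)" using j1 by simp
  have "ln (real (m' j)) \<le> ln (real j * (1 + log 2 (real j)))"
    using m'_bound[OF j1] m1 by (subst ln_le_cancel_iff) auto
  also have "\<dots> = ln (real j) + ln (1 + log 2 (real j))"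
  proof -
    have nz1: "real j \<noteq> 0" using j1 by auto
    have nz2: "1 + log 2 (real j) \<noteq> 0" using l0 by linarith
    note nz = nz1 nz2
    show ?thesis unfolding ln_mult using nz by simp
  qed
  finally show "1 + ln (real (m' j)) + ln ((5 + 3 * ln (1 + real j)) / 2)
           \<le> 1 + ln (real j) + ln (1 + log 2 (real j)) + ln ((5 + 3 * ln (1 + real j)) / 2)" by simp
qed



end
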